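(* For every integer $k\ge2$ and every $x\in\mathbb{R}^n$, $$\sqrt[2k-2]{H_{2k-2}(x)}\le\sqrt[2k]{H_{2k}(x)}.$$
   Context: For $m\in\mathbb{N}$, $H_m(x)=h_m(x)/\binom{n+m-1}{m}$ where $h_m(x)=\sum_{\alpha\in\mathbb{N}_0^n,|\alpha|=m}x^\alpha$ is the complete homogeneous symmetric polynomial of degree $m$ in $n$ variables (for even $m$ it is nonnegative on $\mathbb{R}^n$). *)

theory Defs
  imports "HOL-Analysis.Analysis"
begin

definition complete_hom :: "nat \<Rightarrow> real ^ 'n \<Rightarrow> real" where
  "complete_hom m x = (\<Sum>\<alpha> \<in> {\<alpha> :: 'n \<Rightarrow> nat. (\<Sum>i\<in>UNIV. \<alpha> i) = m}. \<Prod>i\<in>UNIV. (x $ i) ^ (\<alpha> i))"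

definition H_norm :: "nat \<Rightarrow> real ^ 'n \<Rightarrow> real" where
  "H_norm m x = complete_hom m x / real ((CARD('n) + m - 1) choose m)"

end

theory Submission
  imports Defs
begin

lemma pow_int: "((\<lambda>s::real. s ^ a) has_integral (1 / real (a+1))) {0..1}"
proof -
  have "((\<lambda>s::real. s ^ a) has_integral ((\<lambda>s. s^(a+1) / real (a+1)) 1 - (\<lambda>s. s^(a+1) / real (a+1)) 0)) {0..1}"
    apply (rule fundamental_theorem_of_calculus)
     apply simp
    unfolding has_real_derivative_iff_has_vector_derivative [symmetric]
    apply (rule derivative_eq_intros | force)+
    done
  then show ?thesis by simp
qed

lemma beta_int: "((\<lambda>s::real. s ^ a * (1 - s) ^ b) has_integral (fact a * fact b / fact (a+b+1))) {0..1}"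
proof (induction b arbitrary: a)
  case 0
  then show ?case using pow_int[of a] by (simp add: fact_Suc)
next
  case (Suc b)
  have e: "(\<lambda>s::real. s ^ a * (1 - s) ^ Suc b) = (\<lambda>s. s ^ a * (1 - s) ^ b - s ^ (a+1) * (1 - s) ^ b)"
    by (auto simp: algebra_simps)
  have v: "fact a * fact b / fact (a+b+1) - fact (a+1) * fact b / fact (a+1+b+1) = (fact a * fact (Suc b) / fact (a + Suc b + 1) :: real)"
  proof -
    have f1: "fact (a+1+b+1) = (real (a+b+2)) * (fact (a+b+1) :: real)"
      by (metis add_2_eq_Suc' add.commute add.left_commute fact_Suc of_nat_fact plus_1_eq_Suc)
    have f2: "fact (a+1) = real (a+1) * (fact a :: real)" by simp
    have f3: "fact (Suc b) = real (b+1) * (fact b :: real)" by simp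
    have f4: "a + Suc b + 1 = a+1+b+1" by simp
    have g: "X * Y / F - (real (a+1) * X) * Y / (real (a+b+2) * F) = X * (real (b+1) * Y) / (real (a+b+2) * F)"
      if "F > 0" for X Y F :: real
    proof -
      have d: "real (a+b+2) * F > 0" using that by simp
      have "X * Y / F - (real (a+1) * X) * Y / (real (a+b+2) * F) = (X * Y * real (a+b+2) - (real (a+1) * X) * Y) / (real (a+b+2) * F)"
        using d that by (simp add: divide_simps)
      also have "\<dots> = X * (real (b+1) * Y) / (real (a+b+2) * F)"
        by (simp add: algebra_simps)
      finally show ?thesis .
    qed
    have "fact (a+b+1) > (0::real)" by simp
    from g[OF this, of "fact a" "fact b"] show ?thesis unfolding f4 f1 f2 f3 by simp
  qed
  show ?case unfolding e using has_integral_diff[OF Suc.IH[of a] Suc.IH[of "a+1"]] v by simp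
qed

fun hl :: "nat \<Rightarrow> real list \<Rightarrow> real" where
  "hl m [] = (if m = 0 then 1 else 0)"
| "hl m (a # xs) = (\<Sum>j\<le>m. a ^ (m - j) * hl j xs)"

definition Ml :: "nat \<Rightarrow> real list \<Rightarrow> real" where
  "Ml m xs = hl m xs / real ((length xs + m - 1) choose m)"

fun Lf :: "real list \<Rightarrow> (real \<Rightarrow> real) \<Rightarrow> real" where
  "Lf [] f = 0"
| "Lf [b] f = f b"
| "Lf (a # b # xs) f = integral {0..1}
     (\<lambda>s. real (length (b # xs)) * s ^ (length xs) * Lf (b # xs) (\<lambda>t. f (a + s * (t - a))))"

lemma Lf_nonneg: "(\<And>t. f t \<ge> 0) \<Longrightarrow> Lf xs f \<ge> 0"
proof (induction xs f rule: Lf.induct)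
  case (3 a b xs f)
  show ?case
  proof (cases "(\<lambda>s. real (length (b # xs)) * s ^ (length xs) * Lf (b # xs) (\<lambda>t. f (a + s * (t - a)))) integrable_on {0..1}")
    case True
    then show ?thesis
      by (simp only: Lf.simps) (rule integral_nonneg, simp, use 3 in auto)
  next
    case False
    then show ?thesis using not_integrable_integral[OF False] by (simp del: length_Cons)
  qed
qed auto

lemma Ml_single: "Ml m [b] = b ^ m"
proof -
  have "hl m [b] = b ^ m"
    by (simp add: if_distrib cong: if_cong) 
  then show ?thesis by (simp add: Ml_def)
qed

lemma fact_ident:
  assumes "j \<le> m"
  shows "real (m choose j) / real ((l + j) choose j) * real (Suc l) * (fact (l + j) * fact (m - j) / fact (Suc l + m))
     = 1 / real ((Suc l + m) choose m)"
proof -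
  have b1: "real (m choose j) = fact m / (fact j * fact (m - j))" using binomial_fact[OF assms] by simp
  have b2: "real ((l + j) choose j) = fact (l+j) / (fact j * fact l)" using binomial_fact[of j "l+j"] by simp
  have b3: "real ((Suc l + m) choose m) = fact (Suc l + m) / (fact m * fact (Suc l))" using binomial_fact[of m "Suc l + m"] by simp
  have b4: "fact (Suc l) = real (Suc l) * (fact l :: real)" by simp
  have g: "A / (J * D) / (B / (J * C)) * S * (B * D / E) = 1 / (E / (A * (S * C)))"
    if "A > 0" "J > 0" "D > 0" "B > 0" "C > 0" "E > 0" "S > 0" for A J D B C E S :: real
    using that by (simp add: divide_simps)
  show ?thesis unfolding b1 b2 b3 b4 by (rule g) auto
qed

lemma Ml_rec:
  assumes "ys \<noteq> []"
  shows "Ml m (a # ys) = (\<Sum>j\<le>m. real (m choose j) * a ^ (m - j) * Ml j ys * real (length ys)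
           * (fact (length ys - 1 + j) * fact (m - j) / fact (length ys + m)))"
proof -
  obtain l where l: "length ys = Suc l" using assms by (cases ys) auto
  have "Ml m (a # ys) = (\<Sum>j\<le>m. a ^ (m - j) * hl j ys) / real ((Suc l + m) choose m)"
    by (simp add: Ml_def l)
  also have "\<dots> = (\<Sum>j\<le>m. a ^ (m - j) * hl j ys / real ((Suc l + m) choose m))"
    by (simp add: sum_divide_distrib)
  also have "\<dots> = (\<Sum>j\<le>m. real (m choose j) * a ^ (m - j) * Ml j ys * real (length ys)
           * (fact (length ys - 1 + j) * fact (m - j) / fact (length ys + m)))"
  proof (rule sum.cong)
    fix j assume "j \<in> {..m}"
    then have jm: "j \<le> m" by simp
    have "a ^ (m - j) * hl j ys / real ((Suc l + m) choose m) = a ^ (m - j) * hl j ys * (1 / real ((Suc l + m) choose m))"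
      by simp
    also have "\<dots> = a ^ (m - j) * hl j ys * (real (m choose j) / real ((l + j) choose j) * real (Suc l) * (fact (l + j) * fact (m - j) / fact (Suc l + m)))"
      by (simp only: fact_ident[OF jm])
    also have "\<dots> = real (m choose j) * a ^ (m - j) * Ml j ys * real (length ys)
           * (fact (length ys - 1 + j) * fact (m - j) / fact (length ys + m))"
      by (simp add: Ml_def l)
    finally show "a ^ (m - j) * hl j ys / real ((Suc l + m) choose m) = \<dots>" .
  qed simp
  finally show ?thesis .
qed

lemma Lf_poly:
  "xs \<noteq> [] \<Longrightarrow> Lf xs (\<lambda>t. \<Sum>i\<le>N. c i * t ^ i) = (\<Sum>i\<le>N. c i * Ml i xs)"
proof (induction xs arbitrary: c)
  case Nil
  then show ?case by simp
next
  case (Cons a ys)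
  show ?case
  proof (cases ys)
    case Nil
    then show ?thesis by (simp add: Ml_single)
  next
    case (Cons b zs)
    let ?n = "length ys"
    define q where "q s j = (\<Sum>i\<le>N. c i * real (i choose j) * s ^ j * ((1 - s) * a) ^ (i - j))" for s j
    define K where "K i j = real ?n * (c i * real (i choose j) * a ^ (i - j) * Ml j ys)" for i j
    define B where "B i j = (fact (length zs + j) * fact (i - j) / fact (length zs + j + (i - j) + 1) :: real)" for i j
    have inner: "(\<lambda>t. \<Sum>i\<le>N. c i * (a + s * (t - a)) ^ i) = (\<lambda>t. \<Sum>j\<le>N. q s j * t ^ j)" for s
    proof
      fix t
      have "(\<Sum>i\<le>N. c i * (a + s * (t - a)) ^ i) = (\<Sum>i\<le>N. \<Sum>j\<le>N. c i * real (i choose j) * s ^ j * ((1 - s) * a) ^ (i - j) * t ^ j)"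
      proof (rule sum.cong)
        fix i assume iN: "i \<in> {..N}"
        have "(a + s * (t - a)) ^ i = (s * t + (1 - s) * a) ^ i" by (simp add: algebra_simps)
        also have "\<dots> = (\<Sum>j\<le>i. real (i choose j) * (s * t) ^ j * ((1 - s) * a) ^ (i - j))"
          by (rule binomial_ring)
        also have "\<dots> = (\<Sum>j\<le>N. real (i choose j) * (s * t) ^ j * ((1 - s) * a) ^ (i - j))"
          by (rule sum.mono_neutral_left) (use iN in auto)
        finally show "c i * (a + s * (t - a)) ^ i = (\<Sum>j\<le>N. c i * real (i choose j) * s ^ j * ((1 - s) * a) ^ (i - j) * t ^ j)"
          by (simp add: sum_distrib_left power_mult_distrib algebra_simps)
      qed simp
      also have "\<dots> = (\<Sum>j\<le>N. q s j * t ^ j)"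
        by (subst sum.swap) (simp add: q_def sum_distrib_right)
      finally show "(\<Sum>i\<le>N. c i * (a + s * (t - a)) ^ i) = (\<Sum>j\<le>N. q s j * t ^ j)" .
    qed
    have ys: "ys \<noteq> []" using Cons by simp
    have integrand: "real ?n * s ^ (length zs) * Lf ys (\<lambda>t. \<Sum>i\<le>N. c i * (a + s * (t - a)) ^ i)
        = (\<Sum>j\<le>N. \<Sum>i\<le>N. K i j * (s ^ (length zs + j) * (1 - s) ^ (i - j)))" for s
    proof -
      have "Lf ys (\<lambda>t. \<Sum>i\<le>N. c i * (a + s * (t - a)) ^ i) = (\<Sum>j\<le>N. q s j * Ml j ys)"
        unfolding inner by (rule Cons.IH[OF ys])
      then have "real ?n * s ^ (length zs) * Lf ys (\<lambda>t. \<Sum>i\<le>N. c i * (a + s * (t - a)) ^ i)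
         = (\<Sum>j\<le>N. \<Sum>i\<le>N. real ?n * s ^ (length zs) * (c i * real (i choose j) * s ^ j * ((1 - s) * a) ^ (i - j) * Ml j ys))"
        by (simp add: q_def sum_distrib_left sum_distrib_right)
      also have "\<dots> = (\<Sum>j\<le>N. \<Sum>i\<le>N. K i j * (s ^ (length zs + j) * (1 - s) ^ (i - j)))"
        by (intro sum.cong refl) (simp add: K_def power_add power_mult_distrib ac_simps)
      finally show ?thesis .
    qed
    have hi: "((\<lambda>s. \<Sum>j\<le>N. \<Sum>i\<le>N. K i j * (s ^ (length zs + j) * (1 - s) ^ (i - j))) has_integral
        (\<Sum>j\<le>N. \<Sum>i\<le>N. K i j * B i j)) {0..1}"
      unfolding B_def
      by (rule has_integral_sum, simp, rule has_integral_sum, simp, rule has_integral_mult_right, rule beta_int)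
    have "Lf (a # ys) (\<lambda>t. \<Sum>i\<le>N. c i * t ^ i)
       = integral {0..1} (\<lambda>s. real ?n * s ^ (length zs) * Lf ys (\<lambda>t. \<Sum>i\<le>N. c i * (a + s * (t - a)) ^ i))"
      by (simp add: Cons)
    also have "\<dots> = (\<Sum>j\<le>N. \<Sum>i\<le>N. K i j * B i j)"
      unfolding integrand using hi by (rule integral_unique)
    also have "\<dots> = (\<Sum>i\<le>N. \<Sum>j\<le>N. K i j * B i j)"
      by (rule sum.swap)
    also have "\<dots> = (\<Sum>i\<le>N. c i * Ml i (a # ys))"
    proof (rule sum.cong)
      fix i assume "i \<in> {..N}"
      then have iN: "i \<le> N" by simp
      have "(\<Sum>j\<le>N. K i j * B i j) = (\<Sum>j\<le>i. K i j * B i j)"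
        by (rule sum.mono_neutral_right) (use iN in \<open>auto simp: K_def\<close>)
      also have "\<dots> = c i * (\<Sum>j\<le>i. real (i choose j) * a ^ (i - j) * Ml j ys * real (length ys)
           * (fact (length ys - 1 + j) * fact (i - j) / fact (length ys + i)))"
        unfolding sum_distrib_left
      proof (rule sum.cong)
        fix j assume "j \<in> {..i}"
        then have "length zs + j + (i - j) + 1 = length ys + i" "length ys - 1 + j = length zs + j"
          using Cons by auto
        then show "K i j * B i j
          = c i * (real (i choose j) * a ^ (i - j) * Ml j ys * real (length ys)
           * (fact (length ys - 1 + j) * fact (i - j) / fact (length ys + i)))"
          using Cons by (simp add: K_def B_def del: fact_Suc)
      qed simp
      also have "\<dots> = c i * Ml i (a # ys)"
        by (simp add: Ml_rec[OF ys])
      finally show "(\<Sum>j\<le>N. K i j * B i j) = c i * Ml i (a # ys)" .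
    qed simp
    finally show ?thesis .
  qed
qed


lemma hl_0: "hl 0 xs = 1"
  by (induction xs) auto

lemma Ml_0: "Ml 0 xs = 1"
  by (simp add: Ml_def hl_0)

lemma quad_nonneg:
  assumes "xs \<noteq> []"
  shows "c^2 * Ml (2*i) xs + 2*c*d * Ml (2*i+2) xs + d^2 * Ml (2*i+4) xs \<ge> 0"
proof -
  define cf where "cf m = (if m = 2*i then c^2 else 0) + (if m = 2*i+2 then 2*c*d else 0) + (if m = 2*i+4 then d^2 else (0::real))" for m
  have e1: "(\<Sum>m\<le>2*i+4. cf m * g m) = c^2 * g (2*i) + 2*c*d * g (2*i+2) + d^2 * g (2*i+4)" for g :: "nat \<Rightarrow> real"
  proof -
    have pt: "cf m * g m = (if m = 2*i then c^2 * g m else 0) + (if m = 2*i+2 then 2*c*d*g m else 0) + (if m = 2*i+4 then d^2 * g m else 0)" for m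
      by (simp add: cf_def distrib_right)
    show ?thesis
      by (simp only: pt sum.distrib) (simp add: sum.delta)
  qed
  have "Lf xs (\<lambda>t. \<Sum>m\<le>2*i+4. cf m * t ^ m) = (\<Sum>m\<le>2*i+4. cf m * Ml m xs)"
    by (rule Lf_poly[OF assms])
  also have "\<dots> = c^2 * Ml (2*i) xs + 2*c*d * Ml (2*i+2) xs + d^2 * Ml (2*i+4) xs"
    by (rule e1)
  finally have eq: "Lf xs (\<lambda>t. \<Sum>m\<le>2*i+4. cf m * t ^ m) = c^2 * Ml (2*i) xs + 2*c*d * Ml (2*i+2) xs + d^2 * Ml (2*i+4) xs" .
  have "Lf xs (\<lambda>t. \<Sum>m\<le>2*i+4. cf m * t ^ m) \<ge> 0"
  proof (rule Lf_nonneg)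
    fix t :: real
    have "(\<Sum>m\<le>2*i+4. cf m * t ^ m) = c^2 * t^(2*i) + 2*c*d * t^(2*i+2) + d^2 * t^(2*i+4)"
      by (rule e1)
    also have "\<dots> = (c * t^i + d * t^(i+2))^2"
    proof -
      have "2*i = i+i" "2*i+2 = i+(i+2)" "2*i+4 = (i+2)+(i+2)" by simp_all
      then have e: "t^(2*i) = t^i * t^i" "t^(2*i+2) = t^i * t^(i+2)" "t^(2*i+4) = t^(i+2) * t^(i+2)"
        by (simp_all only: power_add)
      show ?thesis unfolding e by (simp add: power2_eq_square algebra_simps)
    qed
    finally show "(\<Sum>m\<le>2*i+4. cf m * t ^ m) \<ge> 0" by simp
  qed
  with eq show ?thesis by simp
qed

lemma cs_from_quad:
  fixes A B C :: real
  assumes "\<And>c d. c^2 * A + 2*c*d * B + d^2 * C \<ge> 0"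
  shows "A \<ge> 0" "C \<ge> 0" "B^2 \<le> A * C"
proof -
  show A: "A \<ge> 0" using assms[of 1 0] by simp
  show C: "C \<ge> 0" using assms[of 0 1] by simp
  show "B^2 \<le> A * C"
  proof (cases "A = 0")
    case True
    show ?thesis
    proof (rule ccontr)
      assume "\<not> ?thesis"
      then have "B \<noteq> 0" using True by simp
      have "0 \<le> (- (C+1) / (2*B))^2 * A + 2*(- (C+1) / (2*B))*1 * B + 1^2 * C" by (rule assms)
      also have "\<dots> = -1" using True \<open>B \<noteq> 0\<close> by (simp add: field_simps)
      finally show False by simp
    qed
  next
    case False
    then have Ap: "A > 0" using A by simp
    have "0 \<le> (-B)^2 * A + 2*(-B)*A * B + A^2 * C" by (rule assms)
    also have "\<dots> = A * (A * C - B^2)" by (simp add: power2_eq_square algebra_simps)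
    finally have "0 \<le> A * (A * C - B^2)" .
    then have "0 \<le> A * C - B^2" using Ap by (simp add: zero_le_mult_iff)
    then show ?thesis by simp
  qed
qed

lemma logconv_seq:
  fixes a :: "nat \<Rightarrow> real"
  assumes a0: "a 0 = 1" and nn: "\<And>j. a j \<ge> 0" and lc: "\<And>j. (a (j+1))^2 \<le> a j * a (j+2)"
  shows "a j ^ (j+1) \<le> a (j+1) ^ j"
proof (induction j)
  case 0
  then show ?case using a0 by simp
next
  case (Suc j)
  show ?case
  proof (cases "a (j+1) = 0")
    case True
    then show ?thesis using nn by simp
  next
    case False
    then have p: "a (j+1) > 0" using nn[of "j+1"] by simp
    have "a (j+1) ^ (2*(j+1)) = ((a (j+1))^2) ^ (j+1)" by (simp only: power_mult)
    also have "\<dots> \<le> (a j * a (j+2)) ^ (j+1)"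
      by (rule power_mono[OF lc]) simp
    also have "\<dots> = a j ^ (j+1) * a (j+2) ^ (j+1)" by (simp add: power_mult_distrib)
    also have "\<dots> \<le> a (j+1) ^ j * a (j+2) ^ (j+1)"
      by (rule mult_right_mono[OF Suc.IH]) (use nn in simp)
    finally have f: "a (j+1) ^ (2*(j+1)) \<le> a (j+1) ^ j * a (j+2) ^ (j+1)" .
    have "2*(j+1) = j + (j+2)" by simp
    then have eq: "a (j+1) ^ (2*(j+1)) = a (j+1) ^ j * a (j+1) ^ (j+2)"
      by (simp only: power_add)
    have "a (j+1) ^ j * a (j+1) ^ (j+2) \<le> a (j+1) ^ j * a (j+2) ^ (j+1)" using f by (simp only: eq)
    then have "a (j+1) ^ (j+2) \<le> a (j+2) ^ (j+1)"
      using p by (simp add: mult_le_cancel_left_pos)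
    then show ?thesis by (simp add: numeral_2_eq_2)
  qed
qed

definition G :: "'a set \<Rightarrow> nat \<Rightarrow> ('a \<Rightarrow> real) \<Rightarrow> real" where
  "G I m f = (\<Sum>\<alpha>\<in>{\<alpha>. (\<forall>i. i \<notin> I \<longrightarrow> \<alpha> i = 0) \<and> sum \<alpha> I = m}. \<Prod>i\<in>I. f i ^ \<alpha> i)"

lemma finite_S: "finite I \<Longrightarrow> finite {\<alpha>::'a\<Rightarrow>nat. (\<forall>i. i \<notin> I \<longrightarrow> \<alpha> i = 0) \<and> sum \<alpha> I = m}"
proof -
  assume fI: "finite I"
  have "{\<alpha>::'a\<Rightarrow>nat. (\<forall>i. i \<notin> I \<longrightarrow> \<alpha> i = 0) \<and> sum \<alpha> I = m}
     \<subseteq> {\<alpha>. \<forall>x. (x \<in> I \<longrightarrow> \<alpha> x \<in> {..m}) \<and> (x \<notin> I \<longrightarrow> \<alpha> x = 0)}"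
    using member_le_sum[OF _ _ fI] by fastforce
  moreover have "finite {\<alpha>::'a\<Rightarrow>nat. \<forall>x. (x \<in> I \<longrightarrow> \<alpha> x \<in> {..m}) \<and> (x \<notin> I \<longrightarrow> \<alpha> x = 0)}"
    by (rule finite_set_of_finite_funs) (use fI in auto)
  ultimately show ?thesis by (rule finite_subset)
qed

lemma G_list: "distinct is \<Longrightarrow> G (set is) m f = hl m (map f is)"
proof (induction "is" arbitrary: m)
  case Nil
  show ?case
  proof (cases "m = 0")
    case True
    have "{\<alpha>::'a\<Rightarrow>nat. (\<forall>i. i \<notin> set [] \<longrightarrow> \<alpha> i = 0) \<and> sum \<alpha> (set []) = m} = {\<lambda>_. 0}"
      using True by auto
    then show ?thesis using True by (simp add: G_def)
  next
    case False
    have "{\<alpha>::'a\<Rightarrow>nat. (\<forall>i. i \<notin> set [] \<longrightarrow> \<alpha> i = 0) \<and> sum \<alpha> (set []) = m} = {}"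
      using False by auto
    then show ?thesis using False by (simp add: G_def)
  qed
next
  case (Cons a "is")
  let ?I = "set is"
  let ?S = "\<lambda>I m. {\<alpha>::'a\<Rightarrow>nat. (\<forall>i. i \<notin> I \<longrightarrow> \<alpha> i = 0) \<and> sum \<alpha> I = m}"
  have aI: "a \<notin> ?I" and d: "distinct is" using Cons.prems by auto
  have fI: "finite ?I" by simp
  have sumupd: "sum (\<alpha>(a := v)) ?I = sum \<alpha> ?I" for \<alpha> :: "'a \<Rightarrow> nat" and v
    by (rule sum.cong) (use aI in auto)
  have produpd: "(\<Prod>i\<in>?I. f i ^ (\<alpha>(a := v)) i) = (\<Prod>i\<in>?I. f i ^ \<alpha> i)" for \<alpha> :: "'a \<Rightarrow> nat" and v
    by (rule prod.cong) (use aI in auto)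
  have "G (set (a # is)) m f = (\<Sum>\<alpha>\<in>?S (insert a ?I) m. f a ^ \<alpha> a * (\<Prod>i\<in>?I. f i ^ \<alpha> i))"
    unfolding G_def using aI by (simp add: prod.insert)
  also have "\<dots> = (\<Sum>p\<in>Sigma {..m} (\<lambda>j. ?S ?I j). f a ^ (m - fst p) * (\<Prod>i\<in>?I. f i ^ snd p i))"
  proof (rule sum.reindex_bij_witness[where j = "\<lambda>\<alpha>. (m - \<alpha> a, \<alpha>(a := 0))" and i = "\<lambda>p. (snd p)(a := m - fst p)"])
    fix \<alpha> assume "\<alpha> \<in> ?S (insert a ?I) m"
    then have z: "\<forall>i. i \<notin> insert a ?I \<longrightarrow> \<alpha> i = 0" and s: "\<alpha> a + sum \<alpha> ?I = m"
      using aI by auto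
    show "(snd (m - \<alpha> a, \<alpha>(a := 0)))(a := m - fst (m - \<alpha> a, \<alpha>(a := 0))) = \<alpha>"
      using s by auto
    show "(m - \<alpha> a, \<alpha>(a := 0)) \<in> Sigma {..m} (\<lambda>j. ?S ?I j)"
      using z s sumupd[of \<alpha> 0] by auto
    show "f a ^ (m - fst (m - \<alpha> a, \<alpha>(a := 0))) * (\<Prod>i\<in>?I. f i ^ snd (m - \<alpha> a, \<alpha>(a := 0)) i)
        = f a ^ \<alpha> a * (\<Prod>i\<in>?I. f i ^ \<alpha> i)"
      using s produpd[of \<alpha> 0] by auto
  next
    fix p assume "p \<in> Sigma {..m} (\<lambda>j. ?S ?I j)"
    then obtain k \<beta> where p: "p = (k, \<beta>)" "k \<le> m" "\<forall>i. i \<notin> ?I \<longrightarrow> \<beta> i = 0" "sum \<beta> ?I = k"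
      by auto
    then have ba: "\<beta> a = 0" using aI by auto
    show "(m - ((snd p)(a := m - fst p)) a, ((snd p)(a := m - fst p))(a := 0)) = p"
      using p ba by auto
    show "(snd p)(a := m - fst p) \<in> ?S (insert a ?I) m"
      using p aI sumupd[of \<beta> "m - k"] by auto
  qed
  also have "\<dots> = (\<Sum>j\<le>m. \<Sum>\<beta>\<in>?S ?I j. f a ^ (m - j) * (\<Prod>i\<in>?I. f i ^ \<beta> i))"
    by (subst sum.Sigma) (auto intro: finite_S simp: split_beta)
  also have "\<dots> = (\<Sum>j\<le>m. f a ^ (m - j) * G ?I j f)"
    by (simp add: G_def sum_distrib_left)
  also have "\<dots> = hl m (map f (a # is))"
    using Cons.IH[OF d] by simp
  finally show ?case .
qed

lemma H_norm_Ml: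
  fixes x :: "real ^ 'n"
  assumes "distinct is" "set is = UNIV"
  shows "H_norm m x = Ml m (map (\<lambda>i. x $ i) is)"
proof -
  have "complete_hom m x = G (UNIV :: 'n set) m (\<lambda>i. x $ i)"
    unfolding complete_hom_def G_def by simp
  also have "\<dots> = hl m (map (\<lambda>i. x $ i) is)"
    using G_list[OF assms(1), of m "\<lambda>i. x $ i"] assms(2) by simp
  finally have "complete_hom m x = hl m (map (\<lambda>i. x $ i) is)" .
  moreover have "length is = CARD('n)"
    using distinct_card[OF assms(1)] assms(2) by simp
  ultimately show ?thesis
    by (simp add: H_norm_def Ml_def)
qed

theorem mainTheorem10:
  fixes x :: "real ^ 'n" and k :: nat
  assumes "k \<ge> 2"
  shows "root (2*k - 2) (H_norm (2*k - 2) x) \<le> root (2*k) (H_norm (2*k) x)"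
proof -
  obtain "is" :: "'n list" where d: "distinct is" and s: "set is = UNIV"
  proof -
    have "finite (UNIV :: 'n set)" by simp
    then show ?thesis using finite_distinct_list that by blast
  qed
  define xs where "xs = map (\<lambda>i. x $ i) is"
  have ne: "xs \<noteq> []" using s by (auto simp: xs_def)
  define a where "a j = Ml (2*j) xs" for j
  have H: "H_norm m x = Ml m xs" for m unfolding xs_def by (rule H_norm_Ml[OF d s])
  have q: "c^2 * a j + 2*c*d * a (j+1) + d^2 * a (j+2) \<ge> 0" for c d j
  proof -
    have e: "2*(j+1) = 2*j+2" "2*(j+2) = 2*j+4" by simp_all
    show ?thesis unfolding a_def e using quad_nonneg[OF ne, of c j d] by simp
  qed
  have nn: "a j \<ge> 0" for j using cs_from_quad(1)[OF q] .
  have lc: "(a (j+1))^2 \<le> a j * a (j+2)" for j using cs_from_quad(3)[OF q] .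
  have a0: "a 0 = 1" by (simp add: a_def Ml_0)
  obtain j where kj: "k = j + 2" using assms by (metis add.commute le_Suc_ex)
  have ineq: "a (j+1) ^ (j+2) \<le> a (j+2) ^ (j+1)"
    using logconv_seq[OF a0 nn lc, of "j+1"] by (simp add: numeral_2_eq_2)
  have L: "H_norm (2*k - 2) x = a (j+1)" using kj by (simp add: H a_def)
  have R: "H_norm (2*k) x = a (j+2)" using kj by (simp add: H a_def)
  define u where "u = root (2*j+2) (a (j+1))"
  define v where "v = root (2*j+4) (a (j+2))"
  have u0: "u \<ge> 0" and v0: "v \<ge> 0" using nn by (auto simp: u_def v_def)
  have uu: "u ^ (2*j+2) = a (j+1)" unfolding u_def by (rule real_root_pow_pos2) (use nn in auto)
  have vv: "v ^ (2*j+4) = a (j+2)" unfolding v_def by (rule real_root_pow_pos2) (use nn in auto)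
  have "u ^ ((2*j+2)*(j+2)) \<le> v ^ ((2*j+4)*(j+1))"
    using ineq by (simp only: power_mult uu vv)
  moreover have "(2*j+4)*(j+1) = (2*j+2)*(j+2)" by (simp add: algebra_simps)
  ultimately have "u ^ ((2*j+2)*(j+2)) \<le> v ^ ((2*j+2)*(j+2))" by (simp only:)
  moreover have "(2*j+2)*(j+2) = Suc ((2*j+2)*(j+2) - 1)" by simp
  ultimately have "u ^ Suc ((2*j+2)*(j+2) - 1) \<le> v ^ Suc ((2*j+2)*(j+2) - 1)" by (simp only:)
  then have "u \<le> v" by (rule power_le_imp_le_base) (use v0 in simp)
  moreover have "2*k - 2 = 2*j+2" "2*k = 2*j+4" using kj by auto
  ultimately show ?thesis using L R by (simp add: u_def v_def)
qed

end
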